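(* Let $T(n) = (3n+1)/2^{v_2(3n+1)}$ for odd $n \ge 1$, and say an odd $n \equiv 1 \pmod 4$ produces $(L,G)=(1,1)$ if $T(n)\equiv 3 \pmod 4$ and $T(T(n)) \equiv 1 \pmod 4$. For $r \in \{0,\dots,63\}$ with $r \equiv 1 \pmod 4$, consider the integers $n = 64a + r$, $a \ge 0$. Then the set of such $r$ for which some $n = 64a+r$ produces $(L,G)=(1,1)$ is exactly $\{21,25,29,37,53,57\}$; for $r \in \{25,29,57\}$ every $n = 64a+r$ produces $(L,G)=(1,1)$ (unconditional), while for $r \in \{21,37,53\}$ this holds for some but not all $a$ (conditional). In particular the three conditional classes $21,37,53$ all satisfy $r \equiv 5 \pmod 8$.
   Context: $v_2$ is the $2$-adic valuation. $(L,G)=(1,1)$ means that, in the orbit of $n$ under $T$ with burst indicator $X_t = \mathbf{1}[n_t \equiv 1 \pmod 4]$, the burst run starting at $n$ has length $1$ and the following gap run has length $1$. *)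

theory Defs
  imports "HOL-Computational_Algebra.Primes"
begin

definition v2 :: "nat \<Rightarrow> nat" where
  "v2 m = multiplicity (2::nat) m"

definition T :: "nat \<Rightarrow> nat" where
  "T n = (3 * n + 1) div 2 ^ v2 (3 * n + 1)"

definition produces11 :: "nat \<Rightarrow> bool" where
  "produces11 n \<longleftrightarrow> odd n \<and> n mod 4 = 1 \<and> T n mod 4 = 3 \<and> T (T n) mod 4 = 1"

end

theory Submission
  imports Defs
begin

lemma v2_pow_odd: "odd (q::nat) \<Longrightarrow> v2 (2^j * q) = j"
proof (induction j)
  case 0
  then show ?case by (simp add: v2_def not_dvd_imp_multiplicity_0)
next
  case (Suc j)
  have "multiplicity (2::nat) (2*(2^j*q)) = Suc (multiplicity 2 (2^j*q))"
    using Suc.prems by (intro multiplicity_times_same) (auto simp: odd_pos)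
  then show ?case using Suc by (simp add: v2_def mult.assoc)
qed

lemma T_eq: "3 * n + 1 = 2^j * q \<Longrightarrow> odd q \<Longrightarrow> T n = q"
  unfolding T_def by (simp add: v2_pow_odd)

lemma no1: "T n = x \<Longrightarrow> x mod 4 = 1 \<Longrightarrow> \<not> produces11 n"
  unfolding produces11_def by simp

lemma no2: "T n = x \<Longrightarrow> T x = y \<Longrightarrow> y mod 4 = 3 \<Longrightarrow> \<not> produces11 n"
  unfolding produces11_def by simp

lemma yes: "n mod 4 = 1 \<Longrightarrow> T n = x \<Longrightarrow> x mod 4 = 3 \<Longrightarrow> T x = y \<Longrightarrow> y mod 4 = 1
  \<Longrightarrow> produces11 n"
  unfolding produces11_def by (simp add: odd_iff_mod_2_eq_one mod_mod_cancel[of 2 4, symmetric])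

lemma n1: "\<not> produces11 (64*a+1)"
proof -
  have "T (64*a+1) = 48*a+1" by (rule T_eq[where j=2]) simp_all
  then show ?thesis by (rule no1) presburger
qed

lemma n5: "\<not> produces11 (64*a+5)"
proof -
  have "T (64*a+5) = 12*a+1" by (rule T_eq[where j=4]) simp_all
  then show ?thesis by (rule no1) presburger
qed

lemma n13: "\<not> produces11 (64*a+13)"
proof -
  have "T (64*a+13) = 24*a+5" by (rule T_eq[where j=3]) simp_all
  then show ?thesis by (rule no1) presburger
qed

lemma n17: "\<not> produces11 (64*a+17)"
proof -
  have "T (64*a+17) = 48*a+13" by (rule T_eq[where j=2]) simp_all
  then show ?thesis by (rule no1) presburger
qed

lemma n33: "\<not> produces11 (64*a+33)"
proof -
  have "T (64*a+33) = 48*a+25" by (rule T_eq[where j=2]) simp_all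
  then show ?thesis by (rule no1) presburger
qed

lemma n45: "\<not> produces11 (64*a+45)"
proof -
  have "T (64*a+45) = 24*a+17" by (rule T_eq[where j=3]) simp_all
  then show ?thesis by (rule no1) presburger
qed

lemma n49: "\<not> produces11 (64*a+49)"
proof -
  have "T (64*a+49) = 48*a+37" by (rule T_eq[where j=2]) simp_all
  then show ?thesis by (rule no1) presburger
qed

lemma n9: "\<not> produces11 (64*a+9)"
proof -
  have 1: "T (64*a+9) = 48*a+7" by (rule T_eq[where j=2]) simp_all
  have 2: "T (48*a+7) = 72*a+11" by (rule T_eq[where j=1]) simp_all
  show ?thesis by (rule no2[OF 1 2]) presburger
qed

lemma n41: "\<not> produces11 (64*a+41)"
proof -
  have 1: "T (64*a+41) = 48*a+31" by (rule T_eq[where j=2]) simp_all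
  have 2: "T (48*a+31) = 72*a+47" by (rule T_eq[where j=1]) simp_all
  show ?thesis by (rule no2[OF 1 2]) presburger
qed

lemma n61: "\<not> produces11 (64*a+61)"
proof -
  have 1: "T (64*a+61) = 24*a+23" by (rule T_eq[where j=3]) simp_all
  have 2: "T (24*a+23) = 36*a+35" by (rule T_eq[where j=1]) simp_all
  show ?thesis by (rule no2[OF 1 2]) presburger
qed

lemma y25: "produces11 (64*a+25)"
proof -
  have 1: "T (64*a+25) = 48*a+19" by (rule T_eq[where j=2]) simp_all
  have 2: "T (48*a+19) = 72*a+29" by (rule T_eq[where j=1]) simp_all
  show ?thesis by (rule yes[OF _ 1 _ 2]) presburger+
qed

lemma y29: "produces11 (64*a+29)"
proof -
  have 1: "T (64*a+29) = 24*a+11" by (rule T_eq[where j=3]) simp_all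
  have 2: "T (24*a+11) = 36*a+17" by (rule T_eq[where j=1]) simp_all
  show ?thesis by (rule yes[OF _ 1 _ 2]) presburger+
qed

lemma y57: "produces11 (64*a+57)"
proof -
  have 1: "T (64*a+57) = 48*a+43" by (rule T_eq[where j=2]) simp_all
  have 2: "T (48*a+43) = 72*a+65" by (rule T_eq[where j=1]) simp_all
  show ?thesis by (rule yes[OF _ 1 _ 2]) presburger+
qed

lemma c21: "produces11 (64*6+21)" "\<not> produces11 (64*0+21)"
proof -
  have 1: "T 405 = 19" by (rule T_eq[where j=6]) simp_all
  have 2: "T 19 = 29" by (rule T_eq[where j=1]) simp_all
  show "produces11 (64*6+21)" unfolding produces11_def using 1 2 by simp
  have 3: "T 21 = 1" by (rule T_eq[where j=6]) simp_all
  show "\<not> produces11 (64*0+21)" unfolding produces11_def using 3 by simp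
qed

lemma c37: "produces11 (64*1+37)" "\<not> produces11 (64*0+37)"
proof -
  have 1: "T 101 = 19" by (rule T_eq[where j=4]) simp_all
  have 2: "T 19 = 29" by (rule T_eq[where j=1]) simp_all
  show "produces11 (64*1+37)" unfolding produces11_def using 1 2 by simp
  have 3: "T 37 = 7" by (rule T_eq[where j=4]) simp_all
  have 4: "T 7 = 11" by (rule T_eq[where j=1]) simp_all
  show "\<not> produces11 (64*0+37)" unfolding produces11_def using 3 4 by simp
qed

lemma c53: "produces11 (64*1+53)" "\<not> produces11 (64*0+53)"
proof -
  have 1: "T 117 = 11" by (rule T_eq[where j=5]) simp_all
  have 2: "T 11 = 17" by (rule T_eq[where j=1]) simp_all
  show "produces11 (64*1+53)" unfolding produces11_def using 1 2 by simp
  have 3: "T 53 = 5" by (rule T_eq[where j=5]) simp_all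
  show "\<not> produces11 (64*0+53)" unfolding produces11_def using 3 by simp
qed

lemma r_cases: "(r::nat) < 64 \<Longrightarrow> r mod 4 = 1 \<Longrightarrow>
  r \<in> {1,5,9,13,17,21,25,29,33,37,41,45,49,53,57,61}"
  by (simp, presburger)

theorem corollary5p2:
  shows "{r::nat. r < 64 \<and> r mod 4 = 1 \<and> (\<exists>a::nat. produces11 (64 * a + r))}
           = {21, 25, 29, 37, 53, 57}
    \<and> (\<forall>r \<in> {25, 29, 57::nat}. \<forall>a::nat. produces11 (64 * a + r))
    \<and> (\<forall>r \<in> {21, 37, 53::nat}. (\<exists>a::nat. produces11 (64 * a + r))
                                  \<and> (\<exists>a::nat. \<not> produces11 (64 * a + r)))
    \<and> (\<forall>r \<in> {21, 37, 53::nat}. r mod 8 = 5)"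
proof (intro conjI)
  show "{r::nat. r < 64 \<and> r mod 4 = 1 \<and> (\<exists>a::nat. produces11 (64 * a + r))}
           = {21, 25, 29, 37, 53, 57}"
  proof
    show "{r::nat. r < 64 \<and> r mod 4 = 1 \<and> (\<exists>a::nat. produces11 (64 * a + r))}
           \<subseteq> {21, 25, 29, 37, 53, 57}"
    proof
      fix r assume "r \<in> {r::nat. r < 64 \<and> r mod 4 = 1 \<and> (\<exists>a::nat. produces11 (64 * a + r))}"
      then obtain a where h: "r < 64" "r mod 4 = 1" "produces11 (64*a+r)" by blast
      from r_cases[OF h(1,2)]
      have "r=1 \<or> r=5 \<or> r=9 \<or> r=13 \<or> r=17 \<or> r=21 \<or> r=25 \<or> r=29 \<or>
            r=33 \<or> r=37 \<or> r=41 \<or> r=45 \<or> r=49 \<or> r=53 \<or> r=57 \<or> r=61" by simp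
      then show "r \<in> {21, 25, 29, 37, 53, 57}"
        using h(3) n1[of a] n5[of a] n9[of a] n13[of a] n17[of a] n33[of a] n41[of a]
          n45[of a] n49[of a] n61[of a]
        by (elim disjE) simp_all
    qed
    show "{21, 25, 29, 37, 53, 57} \<subseteq>
       {r::nat. r < 64 \<and> r mod 4 = 1 \<and> (\<exists>a::nat. produces11 (64 * a + r))}"
    proof -
      have e: "\<exists>a. produces11 (64*a+21)" "\<exists>a. produces11 (64*a+37)"
        "\<exists>a. produces11 (64*a+53)" "\<exists>a. produces11 (64*a+25)"
        "\<exists>a. produces11 (64*a+29)" "\<exists>a. produces11 (64*a+57)"
        using c21(1) c37(1) c53(1) y25 y29 y57 by blast+
      show ?thesis
      proof
        fix r :: nat assume "r \<in> {21, 25, 29, 37, 53, 57}"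
        then have "r=21 \<or> r=25 \<or> r=29 \<or> r=37 \<or> r=53 \<or> r=57" by simp
        then show "r \<in> {r::nat. r < 64 \<and> r mod 4 = 1 \<and> (\<exists>a::nat. produces11 (64 * a + r))}"
          using e by (elim disjE) simp_all
      qed
    qed
  qed
  show "\<forall>r \<in> {25, 29, 57::nat}. \<forall>a::nat. produces11 (64 * a + r)"
    using y25 y29 y57 by simp
  show "\<forall>r \<in> {21, 37, 53::nat}. (\<exists>a::nat. produces11 (64 * a + r))
                                  \<and> (\<exists>a::nat. \<not> produces11 (64 * a + r))"
  proof -
    have "\<exists>a. produces11 (64*a+21)" "\<exists>a. \<not> produces11 (64*a+21)"
      "\<exists>a. produces11 (64*a+37)" "\<exists>a. \<not> produces11 (64*a+37)"
      "\<exists>a. produces11 (64*a+53)" "\<exists>a. \<not> produces11 (64*a+53)"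
      using c21 c37 c53 by blast+
    then show ?thesis by simp
  qed
  show "\<forall>r \<in> {21, 37, 53::nat}. r mod 8 = 5" by simp
qed

end
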